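(* Let $R$ be a pre-Schreier domain and let $a_1,\dots,a_n\in\operatorname{Sqf} R$ be such that $a_i$ and $a_j$ are relatively prime for all $i\neq j$. Then $a_1a_2\cdots a_n\in\operatorname{Sqf} R$.
   Context: A domain is a commutative ring with identity without zero divisors. A domain $R$ is pre-Schreier if every non-zero $a\in R$ is primal: whenever $a\mid bc$ with $b,c\in R$, there exist $a_1,a_2\in R$ with $a=a_1a_2$, $a_1\mid b$ and $a_2\mid c$. Elements $a,b$ are relatively prime if they have no common non-invertible divisor. $R^{\ast}$ denotes the set of invertible elements of $R$. An element $a\in R$ is square-free if it cannot be written as $a=b^2c$ with $b\in R\setminus R^{\ast}$ and $c\in R$; $\operatorname{Sqf} R$ denotes the set of square-free elements of $R$. *)

theory Defs
  imports "HOL-Computational_Algebra.Squarefree"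
begin

definition primal :: "'a::idom \<Rightarrow> bool" where
  "primal a \<longleftrightarrow> (\<forall>b c. a dvd b * c \<longrightarrow>
     (\<exists>a1 a2. a = a1 * a2 \<and> a1 dvd b \<and> a2 dvd c))"

definition pre_Schreier :: "'a::idom itself \<Rightarrow> bool" where
  "pre_Schreier _ \<longleftrightarrow> (\<forall>a::'a. a \<noteq> 0 \<longrightarrow> primal a)"

definition rel_prime :: "'a::idom \<Rightarrow> 'a \<Rightarrow> bool" where
  "rel_prime a b \<longleftrightarrow> (\<forall>d. d dvd a \<longrightarrow> d dvd b \<longrightarrow> d dvd 1)"

end

theory Submission
  imports Defs
begin

lemma sqf_nz: "squarefree (b::'a::idom) \<Longrightarrow> b \<noteq> 0"
  proof
  assume "squarefree b" "b = 0"
  hence "(0::'a)^2 dvd b \<longrightarrow> (0::'a) dvd 1" unfolding squarefree_def by blast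
  thus False using \<open>b = 0\<close> by simp
qed

lemma rp_cancel:
  fixes d :: "'a::idom"
  assumes "pre_Schreier TYPE('a)" "d \<noteq> 0" "rel_prime d b" "d dvd a * b"
  shows "d dvd a"
proof -
  have "primal d" using assms(1,2) unfolding pre_Schreier_def by blast
  then obtain d1 d2 where d: "d = d1 * d2" "d1 dvd a" "d2 dvd b"
    using assms(4) unfolding primal_def by blast
  have "d2 dvd d" using d(1) by simp
  hence "d2 dvd 1" using assms(3) d(3) unfolding rel_prime_def by blast
  then obtain k where k: "1 = d2 * k" by (elim dvdE)
  have "d1 = d * k" using d(1) k by (metis mult.assoc mult_1_right)
  hence "d dvd d1" by simp
  thus ?thesis using d(2) by (rule dvd_trans)
qed

lemma rp_mult:
  fixes x :: "'a::idom"
  assumes "pre_Schreier TYPE('a)" "b \<noteq> 0" "rel_prime x b" "rel_prime y b"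
  shows "rel_prime (x * y) b"
  unfolding rel_prime_def
proof (intro allI impI)
  fix e assume e: "e dvd x * y" "e dvd b"
  have "e \<noteq> 0" using e(2) assms(2) by auto
  hence "primal e" using assms(1) unfolding pre_Schreier_def by blast
  then obtain e1 e2 where ee: "e = e1 * e2" "e1 dvd x" "e2 dvd y"
    using e(1) unfolding primal_def by blast
  have "e1 dvd b" "e2 dvd b" using e(2) ee(1) by (auto intro: dvd_mult_left dvd_mult_right)
  hence "e1 dvd 1" "e2 dvd 1" using assms(3,4) ee unfolding rel_prime_def by blast+
  thus "e dvd 1" using ee(1) mult_dvd_mono[of e1 1 e2 1] by simp
qed

lemma rp_sym: "rel_prime a b \<Longrightarrow> rel_prime b a"
  unfolding rel_prime_def by blast

lemma rp_dvd: "rel_prime a b \<Longrightarrow> x dvd a \<Longrightarrow> rel_prime x b"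
  unfolding rel_prime_def using dvd_trans by blast

lemma half:
  fixes x1 :: "'a::idom"
  assumes ps: "pre_Schreier TYPE('a)" and sa: "squarefree a" and sb: "squarefree b"
    and rp: "rel_prime a b" and x1: "x1 dvd a" and sq: "x1^2 dvd a * b"
  shows "x1 dvd 1"
proof -
  have b0: "b \<noteq> 0" using sqf_nz[OF sb] .
  have a0: "a \<noteq> 0" using sqf_nz[OF sa] .
  have r1: "rel_prime x1 b" using rp_dvd[OF rp x1] .
  have r2: "rel_prime (x1^2) b" using rp_mult[OF ps b0 r1 r1] by (simp add: power2_eq_square)
  have "x1 \<noteq> 0" using x1 a0 dvd_0_left by blast
  hence "x1^2 \<noteq> 0" by simp
  hence "x1^2 dvd a" by (rule rp_cancel[OF ps _ r2 sq])
  thus ?thesis using sa unfolding squarefree_def by blast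
qed

lemma two:
  fixes a :: "'a::idom"
  assumes ps: "pre_Schreier TYPE('a)" and sa: "squarefree a" and sb: "squarefree b"
    and rp: "rel_prime a b"
  shows "squarefree (a * b)"
  unfolding squarefree_def
proof (intro allI impI)
  fix x assume sq: "x^2 dvd a * b"
  have ab0: "a * b \<noteq> 0" using sqf_nz[OF sa] sqf_nz[OF sb] by simp
  have "x \<noteq> 0"
  proof
    assume "x = 0" hence "x^2 = 0" by simp
    thus False using sq ab0 dvd_0_left by metis
  qed
  hence "primal x" using ps unfolding pre_Schreier_def by blast
  moreover have "x dvd a * b" using sq by (metis dvd_mult_left power2_eq_square)
  ultimately obtain x1 x2 where xx: "x = x1 * x2" "x1 dvd a" "x2 dvd b"
    unfolding primal_def by blast
  have "x^2 = x1^2 * x2^2" using xx(1) by (simp add: power_mult_distrib)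
  hence "x1^2 dvd x^2" "x2^2 dvd x^2" by simp_all
  hence s1: "x1^2 dvd a * b" and s2': "x2^2 dvd a * b" using sq dvd_trans by blast+
  have s2: "x2^2 dvd b * a" using s2' by (simp only: mult.commute)
  have "x1 dvd 1" using half[OF ps sa sb rp xx(2) s1] .
  moreover have "x2 dvd 1" using half[OF ps sb sa rp_sym[OF rp] xx(3) s2] .
  ultimately show "x dvd 1" using xx(1) mult_dvd_mono[of x1 1 x2 1] by simp
qed

lemma prod_rp:
  fixes a :: "nat \<Rightarrow> 'a::idom"
  assumes ps: "pre_Schreier TYPE('a)" and c0: "c \<noteq> 0"
  shows "(\<forall>i\<in>{1..n}. rel_prime (a i) c) \<Longrightarrow> rel_prime (\<Prod>i=1..n. a i) c"
proof (induction n)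
  case 0 thus ?case unfolding rel_prime_def by simp
next
  case (Suc n)
  have sub: "{1..n} \<subseteq> {1..Suc n}" by auto
  have "rel_prime (\<Prod>i=1..n. a i) c" using Suc.IH Suc.prems sub by blast
  moreover have "rel_prime (a (Suc n)) c" using Suc.prems by simp
  ultimately have "rel_prime ((\<Prod>i=1..n. a i) * a (Suc n)) c" by (rule rp_mult[OF ps c0])
  moreover have "(\<Prod>i=1..Suc n. a i) = (\<Prod>i=1..n. a i) * a (Suc n)"
    by (simp add: prod.cl_ivl_Suc)
  ultimately show ?case by (metis (no_types))
qed

theorem lemma2:
  fixes a :: "nat \<Rightarrow> 'a::idom" and n :: nat
  assumes "pre_Schreier TYPE('a)"
    and "\<forall>i\<in>{1..n}. squarefree (a i)"
    and "\<forall>i\<in>{1..n}. \<forall>j\<in>{1..n}. i \<noteq> j \<longrightarrow> rel_prime (a i) (a j)"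
  shows "squarefree (\<Prod>i=1..n. a i)"
  using assms(2,3)
proof (induction n)
  case 0 thus ?case unfolding squarefree_def power2_eq_square by (simp, metis dvd_mult_left)
next
  case (Suc n)
  have sub: "{1..n} \<subseteq> {1..Suc n}" by auto
  have p1: "\<forall>i\<in>{1..n}. squarefree (a i)" using Suc.prems(1) sub by blast
  have p2: "\<forall>i\<in>{1..n}. \<forall>j\<in>{1..n}. i \<noteq> j \<longrightarrow> rel_prime (a i) (a j)"
    using Suc.prems(2) sub by blast
  have sq: "squarefree (\<Prod>i=1..n. a i)" using Suc.IH[OF p1 p2] .
  have inn: "Suc n \<in> {1..Suc n}" by simp
  have sn: "squarefree (a (Suc n))" using Suc.prems(1) inn by blast
  have "\<forall>i\<in>{1..n}. rel_prime (a i) (a (Suc n))"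
  proof
    fix i assume i: "i \<in> {1..n}"
    hence "i \<in> {1..Suc n}" "i \<noteq> Suc n" by auto
    thus "rel_prime (a i) (a (Suc n))" using Suc.prems(2) inn by blast
  qed
  hence "rel_prime (\<Prod>i=1..n. a i) (a (Suc n))"
    by (rule prod_rp[OF assms(1) sqf_nz[OF sn]])
  hence "squarefree ((\<Prod>i=1..n. a i) * a (Suc n))" by (rule two[OF assms(1) sq sn])
  moreover have "(\<Prod>i=1..Suc n. a i) = (\<Prod>i=1..n. a i) * a (Suc n)"
    by (simp add: prod.cl_ivl_Suc)
  ultimately show ?case by (metis (no_types))
qed

end
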